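(* Let $\xi$ be a Hopf vector field on the unit sphere $S^{n+1}$, $n=2m$. For arbitrary vector fields $X,Y$ on $S^{n+1}$ put $Y^\perp=Y-\langle\xi,Y\rangle\xi$. Then, along $\xi(S^{n+1})\subset T_1S^{n+1}$, $$\bar\nabla_{X_\xi^\tau}Y_\xi^\nu=(\nabla_XY^\perp)_\xi^\nu-\tfrac12\langle\xi,X\rangle (A_\xi Y^\perp)_\xi^\nu,$$ where $\bar\nabla$ is the Levi-Civita connection of $T_1S^{n+1}$.
   Context: A Hopf vector field on $S^{2m+1}\subset\mathbb R^{2m+2}$ is $\xi(x)=Jx$ for an orthogonal complex structure $J$ on $\mathbb R^{2m+2}$. $\nabla$ is the Levi-Civita connection of $S^{n+1}$, $A_\xi X=-\nabla_X\xi$, $A_\xi^*$ its pointwise adjoint. $T_1S^{n+1}$ carries the metric induced from the Sasaki metric $\langle\langle \tilde X,\tilde Y\rangle\rangle=\langle \pi_*\tilde X,\pi_*\tilde Y\rangle+\langle K\tilde X,K\tilde Y\rangle$ on $TS^{n+1}$. At points of $\xi(S^{n+1})$, $X^h,X^v$ are horizontal and vertical lifts, the tangential lift is $X^t=X^v-\langle X,\xi\rangle\xi^v$, the $\xi$-tangential lift is $X_\xi^\tau=X^h-(A_\xi X)^t$ (tangent to $\xi(S^{n+1})$) and the $\xi$-normal lift is $Y_\xi^\nu=(A_\xi^*Y)^h+Y^t$ (normal to $\xi(S^{n+1})$ in $T_1S^{n+1}$). *)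

theory Defs
  imports "HOL-Analysis.Analysis"
begin

coinductive smooth :: "('a::real_normed_vector \<Rightarrow> 'b::real_normed_vector) \<Rightarrow> bool" where
  "(\<forall>x. f differentiable (at x)) \<Longrightarrow> (\<forall>v. smooth (\<lambda>x. frechet_derivative f (at x) v)) \<Longrightarrow> smooth f"

definition dd :: "('a::real_normed_vector \<Rightarrow> 'b::real_normed_vector) \<Rightarrow> 'a \<Rightarrow> 'a \<Rightarrow> 'b" where
  "dd f x v = frechet_derivative f (at x) v"

definition tanp :: "'a::real_inner \<Rightarrow> 'a \<Rightarrow> 'a" where
  "tanp x w = w - (w \<bullet> x) *\<^sub>R x"

(* Levi-Civita connection of the round unit sphere (Gauss formula) *)
definition nabla :: "('a::euclidean_space \<Rightarrow> 'a) \<Rightarrow> ('a \<Rightarrow> 'a) \<Rightarrow> 'a \<Rightarrow> 'a" where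
  "nabla X Y x = tanp x (dd Y x (X x))"

(* A_xi X = - nabla_X xi, for the Hopf field xi(x) = J x *)
definition Aop :: "('a::euclidean_space \<Rightarrow> 'a) \<Rightarrow> ('a \<Rightarrow> 'a) \<Rightarrow> 'a \<Rightarrow> 'a" where
  "Aop J X x = - nabla X (\<lambda>y. J y) x"

definition Astar :: "('a::euclidean_space \<Rightarrow> 'a) \<Rightarrow> 'a \<Rightarrow> 'a \<Rightarrow> 'a" where
  "Astar J x w = (THE u. u \<bullet> x = 0 \<and>
      (\<forall>v. v \<bullet> x = 0 \<longrightarrow> Aop J (\<lambda>_. v) x \<bullet> w = v \<bullet> u))"

definition perp :: "('a::euclidean_space \<Rightarrow> 'a) \<Rightarrow> ('a \<Rightarrow> 'a) \<Rightarrow> 'a \<Rightarrow> 'a" where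
  "perp J Y y = Y y - (J y \<bullet> Y y) *\<^sub>R J y"

(* TS^{n+1} = {(x,v). |x|=1, v.x=0} inside 'a x 'a; tangent spaces *)
definition TTS :: "'a::euclidean_space \<times> 'a \<Rightarrow> ('a \<times> 'a) set" where
  "TTS p = {w. fst w \<bullet> fst p = 0 \<and> fst w \<bullet> snd p + snd w \<bullet> fst p = 0}"

definition T1S :: "('a::euclidean_space \<times> 'a) set" where
  "T1S = {p. norm (fst p) = 1 \<and> norm (snd p) = 1 \<and> fst p \<bullet> snd p = 0}"

definition TT1S :: "'a::euclidean_space \<times> 'a \<Rightarrow> ('a \<times> 'a) set" where
  "TT1S p = {w \<in> TTS p. snd w \<bullet> snd p = 0}"

(* connection map K at p=(x,v): K(a,b) = covariant derivative = tangential part of b *)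
definition Kmap :: "'a::euclidean_space \<times> 'a \<Rightarrow> 'a \<times> 'a \<Rightarrow> 'a" where
  "Kmap p w = tanp (fst p) (snd w)"

(* Sasaki metric: <pi_* w, pi_* w'> + <K w, K w'>, pi_* = fst *)
definition sasaki :: "'a::euclidean_space \<times> 'a \<Rightarrow> 'a \<times> 'a \<Rightarrow> 'a \<times> 'a \<Rightarrow> real" where
  "sasaki p w w' = fst w \<bullet> fst w' + Kmap p w \<bullet> Kmap p w'"

definition hlift :: "'a::euclidean_space \<times> 'a \<Rightarrow> 'a \<Rightarrow> 'a \<times> 'a" where
  "hlift p X = (THE w. w \<in> TTS p \<and> fst w = X \<and> Kmap p w = 0)"

definition vlift :: "'a::euclidean_space \<times> 'a \<Rightarrow> 'a \<Rightarrow> 'a \<times> 'a" where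
  "vlift p X = (THE w. w \<in> TTS p \<and> fst w = 0 \<and> Kmap p w = X)"

definition pt :: "('a::euclidean_space \<Rightarrow> 'a) \<Rightarrow> 'a \<Rightarrow> 'a \<times> 'a" where
  "pt J x = (x, J x)"

definition tlift :: "('a::euclidean_space \<Rightarrow> 'a) \<Rightarrow> 'a \<Rightarrow> 'a \<Rightarrow> 'a \<times> 'a" where
  "tlift J x X = vlift (pt J x) X - (X \<bullet> J x) *\<^sub>R vlift (pt J x) (J x)"

definition tau_lift :: "('a::euclidean_space \<Rightarrow> 'a) \<Rightarrow> ('a \<Rightarrow> 'a) \<Rightarrow> 'a \<Rightarrow> 'a \<times> 'a" where
  "tau_lift J X x = hlift (pt J x) (X x) - tlift J x (Aop J X x)"

definition nu_lift :: "('a::euclidean_space \<Rightarrow> 'a) \<Rightarrow> ('a \<Rightarrow> 'a) \<Rightarrow> 'a \<Rightarrow> 'a \<times> 'a" where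
  "nu_lift J Y x = hlift (pt J x) (Astar J x (Y x)) + tlift J x (Y x)"

definition bracket :: "('b::euclidean_space \<Rightarrow> 'b) \<Rightarrow> ('b \<Rightarrow> 'b) \<Rightarrow> 'b \<Rightarrow> 'b" where
  "bracket U W q = dd W q (U q) - dd U q (W q)"

(* Levi-Civita connection of (T_1 S, Sasaki metric), via the Koszul formula;
   vector fields on T_1 S are smooth ambient fields tangent to T_1 S along T_1 S *)
definition LCT1 :: "('a::euclidean_space \<times> 'a \<Rightarrow> 'a \<times> 'a) \<Rightarrow> ('a \<times> 'a \<Rightarrow> 'a \<times> 'a)
                    \<Rightarrow> 'a \<times> 'a \<Rightarrow> 'a \<times> 'a" where
  "LCT1 U W q = (THE w. w \<in> TT1S q \<and>
     (\<forall>Z. smooth Z \<and> (\<forall>p\<in>T1S. Z p \<in> TT1S p) \<longrightarrow>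
        2 * sasaki q w (Z q) =
          dd (\<lambda>p. sasaki p (W p) (Z p)) q (U q)
        + dd (\<lambda>p. sasaki p (U p) (Z p)) q (W q)
        - dd (\<lambda>p. sasaki p (U p) (W p)) q (Z q)
        + sasaki q (bracket U W q) (Z q)
        - sasaki q (bracket U Z q) (W q)
        - sasaki q (bracket W Z q) (U q)))"

end

theory Submission
  imports Defs
begin


locale hopf =
  fixes J :: "'a::euclidean_space \<Rightarrow> 'a"
  assumes ot: "orthogonal_transformation J" and JJ: "\<And>z. J (J z) = - z"
begin

lemma lin: "linear J" using ot by (simp add: orthogonal_transformation_def)
lemma bl: "bounded_linear J" using lin by (simp add: linear_conv_bounded_linear)
lemma JiJ[simp]: "J a \<bullet> J b = a \<bullet> b" using ot by (simp add: orthogonal_transformation_def)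
lemma Jadd[simp]: "J (a + b) = J a + J b" using lin by (simp add: linear_add)
lemma Jdiff[simp]: "J (a - b) = J a - J b" using lin by (simp add: linear_diff)
lemma Jneg[simp]: "J (- a) = - J a" using lin by (simp add: linear_neg)
lemma Jscale[simp]: "J (c *\<^sub>R a) = c *\<^sub>R J a" using lin by (simp add: linear_scale)
lemma JJs[simp]: "J (J z) = - z" by (rule JJ)
lemma Jzero[simp]: "J 0 = 0" using lin by (simp add: linear_0)
lemma Jskew: "J a \<bullet> b = - (a \<bullet> J b)"
proof -
  have "J a \<bullet> b = J (J a) \<bullet> J b" by (rule JiJ[symmetric])
  also have "\<dots> = - (a \<bullet> J b)" by (simp only: JJs inner_minus_left)
  finally show ?thesis .
qed
lemma Jright: "a \<bullet> J b = - (J a \<bullet> b)" by (simp add: Jskew)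
lemma Jself[simp]: "J a \<bullet> a = 0" "a \<bullet> J a = 0"
  using Jskew[of a a] by (auto simp: inner_commute)
lemma Jder: "(J has_derivative J) (at z)" using bl by (rule bounded_linear_imp_has_derivative)
lemma ddJ[simp]: "dd (\<lambda>y. J y) z v = J v"
  using frechet_derivative_at[OF Jder] by (simp add: dd_def)

lemma Aop_eq: "Aop J (\<lambda>_. v) x = - tanp x (J v)"
  by (simp add: Aop_def nabla_def)
lemma Aop_eq2: "Aop J F x = - tanp x (J (F x))"
  by (simp add: Aop_def nabla_def)

lemma Astar_eq:
  assumes "x \<bullet> x = 1"
  shows "Astar J x w = J w - (J w \<bullet> x) *\<^sub>R x - (x \<bullet> w) *\<^sub>R J x"
  unfolding Astar_def
proof (rule the_equality)
  let ?u = "J w - (J w \<bullet> x) *\<^sub>R x - (x \<bullet> w) *\<^sub>R J x"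
  show "?u \<bullet> x = 0 \<and> (\<forall>v. v \<bullet> x = 0 \<longrightarrow> Aop J (\<lambda>_. v) x \<bullet> w = v \<bullet> ?u)"
    using assms by (auto simp: Aop_eq tanp_def inner_diff_left inner_diff_right Jright Jskew[of x v] Jskew[of w v] inner_commute[of x w] algebra_simps)
  fix u assume u: "u \<bullet> x = 0 \<and> (\<forall>v. v \<bullet> x = 0 \<longrightarrow> Aop J (\<lambda>_. v) x \<bullet> w = v \<bullet> u)"
  have ux: "?u \<bullet> x = 0" using assms by (simp add: inner_diff_left)
  have h: "\<And>v. v \<bullet> x = 0 \<Longrightarrow> Aop J (\<lambda>_. v) x \<bullet> w = v \<bullet> ?u"
    using assms by (auto simp: Aop_eq tanp_def inner_diff_left inner_diff_right Jright Jskew[of x v] Jskew[of w v] inner_commute[of x w] algebra_simps)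
  have "(u - ?u) \<bullet> x = 0" using u ux by (simp add: inner_diff_left)
  hence "(u - ?u) \<bullet> u = (u - ?u) \<bullet> ?u" using u h[of "u - ?u"] by simp
  hence "(u - ?u) \<bullet> (u - ?u) = 0" by (simp add: inner_diff_right)
  thus "u = ?u" by simp
qed

lemma hlift_eq:
  assumes "x \<bullet> x = 1" "a \<bullet> x = 0"
  shows "hlift (x, v) a = (a, - (a \<bullet> v) *\<^sub>R x)"
  unfolding hlift_def
proof (rule the_equality)
  show "(a, - (a \<bullet> v) *\<^sub>R x) \<in> TTS (x, v) \<and> fst (a, - (a \<bullet> v) *\<^sub>R x) = a \<and> Kmap (x, v) (a, - (a \<bullet> v) *\<^sub>R x) = 0"
    using assms by (simp add: TTS_def Kmap_def tanp_def)
  fix w assume w: "w \<in> TTS (x, v) \<and> fst w = a \<and> Kmap (x, v) w = 0"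
  obtain a' b where wab: "w = (a', b)" by force
  have "b = (b \<bullet> x) *\<^sub>R x" using w by (simp add: wab Kmap_def tanp_def)
  moreover have "b \<bullet> x = - (a \<bullet> v)" using w by (auto simp: wab TTS_def)
  ultimately show "w = (a, - (a \<bullet> v) *\<^sub>R x)" using w wab by (metis fst_conv)
qed

lemma vlift_eq:
  assumes "x \<bullet> x = 1" "c \<bullet> x = 0"
  shows "vlift (x, v) c = (0, c)"
  unfolding vlift_def
  apply (rule the_equality)
  using assms apply (simp add: TTS_def Kmap_def tanp_def)
  apply (auto simp: TTS_def Kmap_def tanp_def)
  done

lemma nu_eq:
  assumes "x \<bullet> x = 1" "V \<bullet> x = 0"
  shows "nu_lift J (\<lambda>_. V) x = (J (V - (V \<bullet> J x) *\<^sub>R J x), V - (V \<bullet> J x) *\<^sub>R J x)"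
proof -
  have e: "x \<bullet> J V = - (V \<bullet> J x)" using Jskew[of x V] by (simp add: inner_commute)
  define A' where "A' = J V + (V \<bullet> J x) *\<^sub>R x"
  have AA: "Astar J x V = A'"
    unfolding A'_def using assms by (simp add: Astar_eq inner_commute[of x V] inner_commute[of "J V" x] e)
  have A'x: "A' \<bullet> x = 0" unfolding A'_def using assms e by (simp add: inner_add_left inner_commute[of "J V" x])
  have A'Jx: "A' \<bullet> J x = 0" unfolding A'_def using assms by (simp add: inner_add_left)
  have h: "hlift (x, J x) A' = (A', 0)" using hlift_eq[OF assms(1) A'x, of "J x"] A'Jx by simp
  have v1: "vlift (x, J x) V = (0, V)" using vlift_eq[OF assms] .
  have v2: "vlift (x, J x) (J x) = (0, J x)" using vlift_eq[OF assms(1), of "J x"] by simp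
  have "J (V - (V \<bullet> J x) *\<^sub>R J x) = A'" unfolding A'_def by simp
  thus ?thesis by (simp add: nu_lift_def tlift_def pt_def AA h v1 v2)
qed

lemma tau_eq:
  assumes "x \<bullet> x = 1" "V \<bullet> x = 0"
  shows "tau_lift J (\<lambda>_. V) x = (V, J V)"
proof -
  have e: "J V \<bullet> x = - (V \<bullet> J x)" using Jskew[of V x] by simp
  define A' where "A' = - J V - (V \<bullet> J x) *\<^sub>R x"
  have AA: "Aop J (\<lambda>_. V) x = A'" unfolding A'_def Aop_eq tanp_def e by simp
  have A'x: "A' \<bullet> x = 0" unfolding A'_def using assms e by (simp add: inner_diff_left)
  have A'Jx: "A' \<bullet> J x = 0" unfolding A'_def using assms by (simp add: inner_diff_left)
  have h: "hlift (x, J x) V = (V, - (V \<bullet> J x) *\<^sub>R x)" using hlift_eq[OF assms] .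
  have v1: "vlift (x, J x) A' = (0, A')" using vlift_eq[OF assms(1) A'x] .
  show ?thesis unfolding tau_lift_def tlift_def pt_def AA h v1 A'Jx by (simp add: A'_def)
qed

end


lemma smooth_differentiable: "smooth f \<Longrightarrow> f differentiable (at x)"
  by (erule smooth.cases) auto

lemma smooth_bounded_linear:
  assumes "bounded_linear (f :: 'a::real_normed_vector \<Rightarrow> 'b::real_normed_vector)"
  shows "smooth f"
proof -
  have "bounded_linear f \<or> (\<exists>c. f = (\<lambda>_. c))" using assms by blast
  thus ?thesis
  proof (coinduction arbitrary: f rule: smooth.coinduct)
    case (smooth f)
    then show ?case
    proof
      assume bl: "bounded_linear f"
      have d: "\<And>x. frechet_derivative f (at x) = f"
        using frechet_derivative_at[OF bounded_linear_imp_has_derivative[OF bl]] by simp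
      show ?thesis using bl
        by (auto simp: d intro!: bounded_linear_imp_differentiable)
    next
      assume "\<exists>c. f = (\<lambda>_. c)"
      then obtain c where c: "f = (\<lambda>_. c)" by blast
      have d: "\<And>x. frechet_derivative f (at x) = (\<lambda>_. 0)"
        using frechet_derivative_at[OF has_derivative_const[of c]] c by simp
      show ?thesis by (auto simp: d c)
    qed
  qed
qed

definition Kd :: "'a::euclidean_space \<times> 'a \<Rightarrow> 'a \<times> 'a \<Rightarrow> 'a \<times> 'a \<Rightarrow> 'a" where
  "Kd q w h = - (snd w \<bullet> fst h) *\<^sub>R fst q - (snd w \<bullet> fst q) *\<^sub>R fst h"

definition dg :: "'a::euclidean_space \<times> 'a \<Rightarrow> 'a \<times> 'a \<Rightarrow> 'a \<times> 'a \<Rightarrow> 'a \<times> 'a \<Rightarrow> real" where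
  "dg q h w w' = Kd q w h \<bullet> Kmap q w' + Kmap q w \<bullet> Kd q w' h"

lemma Kmap_deriv:
  assumes "(F has_derivative F') (at q)"
  shows "((\<lambda>p. Kmap p (F p)) has_derivative (\<lambda>h. Kmap q (F' h) + Kd q (F q) h)) (at q)"
  unfolding Kmap_def tanp_def Kd_def
  apply (rule derivative_eq_intros assms | simp)+
  apply (auto simp: algebra_simps inner_commute)
  done

lemma sasaki_deriv:
  assumes F: "(F has_derivative F') (at q)" and G: "(G has_derivative G') (at q)"
  shows "((\<lambda>p. sasaki p (F p) (G p)) has_derivative
     (\<lambda>h. sasaki q (F' h) (G q) + sasaki q (F q) (G' h) + dg q h (F q) (G q))) (at q)"
proof -
  have "((\<lambda>p. fst (F p) \<bullet> fst (G p) + Kmap p (F p) \<bullet> Kmap p (G p)) has_derivative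
     (\<lambda>h. fst (F' h) \<bullet> fst (G q) + fst (F q) \<bullet> fst (G' h) +
          ((Kmap q (F' h) + Kd q (F q) h) \<bullet> Kmap q (G q) + Kmap q (F q) \<bullet> (Kmap q (G' h) + Kd q (G q) h)))) (at q)"
  proof -
    have f1: "((\<lambda>p. fst (F p)) has_derivative (\<lambda>h. fst (F' h))) (at q)" using has_derivative_fst[OF F] .
    have g1: "((\<lambda>p. fst (G p)) has_derivative (\<lambda>h. fst (G' h))) (at q)" using has_derivative_fst[OF G] .
    have "((\<lambda>p. fst (F p) \<bullet> fst (G p) + Kmap p (F p) \<bullet> Kmap p (G p)) has_derivative
     (\<lambda>h. (fst (F q) \<bullet> fst (G' h) + fst (F' h) \<bullet> fst (G q)) +
          (Kmap q (F q) \<bullet> (Kmap q (G' h) + Kd q (G q) h) + (Kmap q (F' h) + Kd q (F q) h) \<bullet> Kmap q (G q)))) (at q)"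
      by (rule has_derivative_add[OF has_derivative_inner[OF f1 g1] has_derivative_inner[OF Kmap_deriv[OF F] Kmap_deriv[OF G]]])
    thus ?thesis by (simp add: algebra_simps)
  qed
  thus ?thesis
    unfolding sasaki_def dg_def by (simp add: inner_add_left inner_add_right algebra_simps)
qed

lemma sasaki_diff_left: "sasaki q (a - b) c = sasaki q a c - sasaki q b c"
  by (simp add: sasaki_def Kmap_def tanp_def inner_diff_left inner_diff_right algebra_simps)
lemma sasaki_sym: "sasaki q a b = sasaki q b a"
  by (simp add: sasaki_def inner_commute)

lemma koszul:
  assumes U: "(U has_derivative U') (at q)" and W: "(W has_derivative W') (at q)"
    and Z: "(Z has_derivative Z') (at q)"
  shows "dd (\<lambda>p. sasaki p (W p) (Z p)) q (U q)
        + dd (\<lambda>p. sasaki p (U p) (Z p)) q (W q)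
        - dd (\<lambda>p. sasaki p (U p) (W p)) q (Z q)
        + sasaki q (bracket U W q) (Z q)
        - sasaki q (bracket U Z q) (W q)
        - sasaki q (bracket W Z q) (U q)
     = 2 * sasaki q (W' (U q)) (Z q) + dg q (U q) (W q) (Z q) + dg q (W q) (U q) (Z q)
        - dg q (Z q) (U q) (W q)"
proof -
  have dU: "\<And>v. dd U q v = U' v" unfolding dd_def frechet_derivative_at[OF U, symmetric] by simp
  have dW: "\<And>v. dd W q v = W' v" unfolding dd_def frechet_derivative_at[OF W, symmetric] by simp
  have dZ: "\<And>v. dd Z q v = Z' v" unfolding dd_def frechet_derivative_at[OF Z, symmetric] by simp
  have d1: "\<And>v. dd (\<lambda>p. sasaki p (W p) (Z p)) q v = sasaki q (W' v) (Z q) + sasaki q (W q) (Z' v) + dg q v (W q) (Z q)"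
    unfolding dd_def frechet_derivative_at[OF sasaki_deriv[OF W Z], symmetric] by simp
  have d2: "\<And>v. dd (\<lambda>p. sasaki p (U p) (Z p)) q v = sasaki q (U' v) (Z q) + sasaki q (U q) (Z' v) + dg q v (U q) (Z q)"
    unfolding dd_def frechet_derivative_at[OF sasaki_deriv[OF U Z], symmetric] by simp
  have d3: "\<And>v. dd (\<lambda>p. sasaki p (U p) (W p)) q v = sasaki q (U' v) (W q) + sasaki q (U q) (W' v) + dg q v (U q) (W q)"
    unfolding dd_def frechet_derivative_at[OF sasaki_deriv[OF U W], symmetric] by simp
  show ?thesis
    unfolding d1 d2 d3 bracket_def dU dW dZ sasaki_diff_left
    using sasaki_sym[of q "W q" "Z' (U q)"] sasaki_sym[of q "U q" "Z' (W q)"]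
      sasaki_sym[of q "U' (Z q)" "W q"] sasaki_sym[of q "U q" "W' (Z q)"]
      sasaki_sym[of q "U' (W q)" "Z q"] sasaki_sym[of q "Z' (U q)" "W q"] sasaki_sym[of q "Z' (W q)" "U q"]
      sasaki_sym[of q "W' (Z q)" "U q"] sasaki_sym[of q "U' (Z q)" "W q"]
    by linarith
qed



lemma TT1S_diff: "a \<in> TT1S q \<Longrightarrow> b \<in> TT1S q \<Longrightarrow> a - b \<in> TT1S q"
  by (auto simp: TT1S_def TTS_def inner_diff_left algebra_simps)

lemma sasaki_pos:
  assumes "q \<in> T1S" "d \<in> TT1S q" "sasaki q d d = 0"
  shows "d = 0"
proof -
  obtain x v where q: "q = (x, v)" by force
  obtain a b where d: "d = (a, b)" by force
  have xx: "x \<bullet> x = 1" using assms(1) q by (simp add: T1S_def norm_eq_1)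
  have "a \<bullet> a + tanp x b \<bullet> tanp x b = 0" using assms(3) q d by (simp add: sasaki_def Kmap_def)
  moreover have "a \<bullet> a \<ge> 0" "tanp x b \<bullet> tanp x b \<ge> 0" by simp_all
  ultimately have "a \<bullet> a = 0" "tanp x b \<bullet> tanp x b = 0" by linarith+
  hence a0: "a = 0" and t0: "tanp x b = 0" by simp_all
  have "b \<bullet> x = 0" using assms(2) q d a0 by (simp add: TT1S_def TTS_def)
  hence "b = 0" using t0 by (simp add: tanp_def)
  thus ?thesis using a0 d by (simp add: zero_prod_def)
qed

definition Sop :: "'a::euclidean_space \<Rightarrow> 'a \<Rightarrow> 'a \<Rightarrow> 'a \<Rightarrow> 'a \<Rightarrow> 'a" where
  "Sop x0 v0 a b y = (x0 \<bullet> y) *\<^sub>R a - (a \<bullet> y) *\<^sub>R x0 + (v0 \<bullet> y) *\<^sub>R b - (b \<bullet> y) *\<^sub>R v0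
     - (b \<bullet> x0) *\<^sub>R ((v0 \<bullet> y) *\<^sub>R x0 - (x0 \<bullet> y) *\<^sub>R v0)"

lemma Sop_linear: "linear (Sop x0 v0 a b)"
  by (rule linearI) (simp_all add: Sop_def inner_add_right scaleR_add_left scaleR_diff_left scaleR_add_right scaleR_diff_right mult.commute mult.left_commute)

lemma Sop_skew: "Sop x0 v0 a b y \<bullet> w = - (Sop x0 v0 a b w \<bullet> y)"
  unfolding Sop_def by (simp add: inner_add_left inner_diff_left inner_diff_right inner_add_right inner_commute ring_distribs)

lemma exists_field:
  assumes q: "q \<in> T1S" and d: "d \<in> TT1S q"
  shows "\<exists>Z. smooth Z \<and> (\<forall>p\<in>T1S. Z p \<in> TT1S p) \<and> Z q = d"
proof -
  obtain x0 v0 where qq: "q = (x0, v0)" by force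
  obtain a b where dd: "d = (a, b)" by force
  let ?S = "Sop x0 v0 a b"
  define Z where "Z p = (?S (fst p), ?S (snd p))" for p :: "'a \<times> 'a"
  have Sl: "linear ?S" by (rule Sop_linear)
  have "linear Z"
    unfolding Z_def
    by (intro linearI) (simp_all add: linear_add[OF Sl] linear_scale[OF Sl])
  hence sm: "smooth Z" by (intro smooth_bounded_linear) (simp add: linear_conv_bounded_linear)
  have sk0: "\<And>y. ?S y \<bullet> y = 0" 
  proof -
    fix y show "?S y \<bullet> y = 0" using Sop_skew[of x0 v0 a b y y] by linarith
  qed
  have tan: "\<forall>p\<in>T1S. Z p \<in> TT1S p"
  proof
    fix p :: "'a \<times> 'a"
    have "?S (fst p) \<bullet> snd p + ?S (snd p) \<bullet> fst p = 0" using Sop_skew[of x0 v0 a b "fst p" "snd p"] by linarith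
    thus "Z p \<in> TT1S p" unfolding Z_def TT1S_def TTS_def using sk0 by simp
  qed
  have x0: "x0 \<bullet> x0 = 1" "v0 \<bullet> v0 = 1" "x0 \<bullet> v0 = 0" using q qq by (auto simp: T1S_def norm_eq_1)
  have dc: "a \<bullet> x0 = 0" "a \<bullet> v0 + b \<bullet> x0 = 0" "b \<bullet> v0 = 0" using d dd qq by (auto simp: TT1S_def TTS_def)
  have "?S x0 = a" using x0 dc by (simp add: Sop_def inner_commute)
  moreover have "?S v0 = b"
  proof -
    have av: "a \<bullet> v0 = - (b \<bullet> x0)" using dc by linarith
    show ?thesis using x0 dc by (simp add: Sop_def inner_commute av)
  qed
  ultimately have "Z q = d" by (simp add: Z_def qq dd)
  thus ?thesis using sm tan by blast
qed



context hopf begin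

lemma alg:
  fixes x Xv Yp D z1 z2 :: 'a
  assumes xx: "x \<bullet> x = 1" and Xx: "Xv \<bullet> x = 0" and Yx: "Yp \<bullet> x = 0" and YJ: "Yp \<bullet> J x = 0"
    and Dx: "D \<bullet> x = - (Xv \<bullet> Yp)"
    and z1: "z1 \<bullet> x = 0" and z12: "z1 \<bullet> J x + z2 \<bullet> x = 0" and z2: "z2 \<bullet> J x = 0"
  defines "N \<equiv> tanp x D"
  defines "AY \<equiv> - tanp x (J Yp)"
  shows "2 * sasaki (x, J x) ((J (N - (N \<bullet> J x) *\<^sub>R J x), N - (N \<bullet> J x) *\<^sub>R J x)
            - (1/2 * (J x \<bullet> Xv)) *\<^sub>R (J (AY - (AY \<bullet> J x) *\<^sub>R J x), AY - (AY \<bullet> J x) *\<^sub>R J x)) (z1, z2)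
       = 2 * sasaki (x, J x) (J D, D) (z1, z2) + dg (x, J x) (Xv, J Xv) (J Yp, Yp) (z1, z2)
         + dg (x, J x) (J Yp, Yp) (Xv, J Xv) (z1, z2) - dg (x, J x) (z1, z2) (Xv, J Xv) (J Yp, Yp)"
proof -
  have e1: "J Xv \<bullet> x = - (J x \<bullet> Xv)" "J z1 \<bullet> x = - (J x \<bullet> z1)" "J D \<bullet> x = - (J x \<bullet> D)"
    "J Yp \<bullet> z2 = - (J z2 \<bullet> Yp)"
    using Jskew[of Xv x] inner_commute[of Xv "J x"] Jskew[of z1 x] inner_commute[of z1 "J x"]
      Jskew[of D x] inner_commute[of D "J x"] Jskew[of Yp z2] inner_commute[of Yp "J z2"]
    by linarith+
  have e2: "J x \<bullet> Yp = 0" "J x \<bullet> z2 = 0" "z2 \<bullet> x = - (J x \<bullet> z1)"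
    using YJ z2 z12 by (simp_all add: inner_commute)
  show ?thesis
  using assms
  apply (simp add: N_def AY_def sasaki_def dg_def Kd_def Kmap_def tanp_def inner_add_left inner_add_right
      inner_diff_left inner_diff_right Jright algebra_simps e1 e2 inner_commute[of x z2] inner_commute[of Yp Xv]
      inner_commute[of z1 Yp] inner_commute[of x Yp] inner_commute[of x z1])
  done
qed


lemma nu_in:
  assumes "x \<bullet> x = 1" "V \<bullet> x = 0"
  shows "(J (V - (V \<bullet> J x) *\<^sub>R J x), V - (V \<bullet> J x) *\<^sub>R J x) \<in> TT1S (x, J x)"
proof -
  have e: "J V \<bullet> x = - (V \<bullet> J x)" using Jskew[of V x] by simp
  have e2: "J V \<bullet> J x = V \<bullet> x" by simp
  show ?thesis using assms unfolding TT1S_def TTS_def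
    by (simp add: inner_diff_left inner_diff_right inner_add_left e)
qed

end

lemma TT1S_scale: "a \<in> TT1S q \<Longrightarrow> c *\<^sub>R a \<in> TT1S q"
  by (auto simp: TT1S_def TTS_def simp flip: distrib_left)


theorem lemma5:
  fixes J :: "'a::euclidean_space \<Rightarrow> 'a" and X Y :: "'a \<Rightarrow> 'a"
    and U W :: "'a \<times> 'a \<Rightarrow> 'a \<times> 'a" and x :: 'a
  assumes "orthogonal_transformation J" and "\<forall>z. J (J z) = - z"
    and "smooth X" and "smooth Y"
    and "\<forall>z\<in>sphere 0 1. X z \<bullet> z = 0" and "\<forall>z\<in>sphere 0 1. Y z \<bullet> z = 0"
    and "smooth U" and "smooth W"
    and "\<forall>p\<in>T1S. U p \<in> TT1S p" and "\<forall>p\<in>T1S. W p \<in> TT1S p"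
    and "\<forall>z\<in>sphere 0 1. U (pt J z) = tau_lift J X z"
    and "\<forall>z\<in>sphere 0 1. W (pt J z) = nu_lift J Y z"
    and "x \<in> sphere 0 1"
  shows "LCT1 U W (pt J x) =
           nu_lift J (nabla X (perp J Y)) x
           - (1/2 * (J x \<bullet> X x)) *\<^sub>R nu_lift J (Aop J (perp J Y)) x"
proof -
  interpret hopf J using assms(1,2) by unfold_locales auto
  define q where "q = pt J x"
  have xx: "x \<bullet> x = 1" using assms(13) by (simp add: norm_eq_1)
  have q_eq: "q = (x, J x)" by (simp add: q_def pt_def)
  have nJ: "\<And>z. norm (J z) = norm z" using assms(1) by (simp add: orthogonal_transformation)
  have qT: "q \<in> T1S" using assms(13) by (simp add: q_eq T1S_def nJ)
  define Xv where "Xv = X x"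
  have Xx: "Xv \<bullet> x = 0" using assms(5,13) by (simp add: Xv_def)
  define P where "P = perp J Y"
  have P_eq: "\<And>z. P z = Y z - (Y z \<bullet> J z) *\<^sub>R J z" by (simp add: P_def perp_def inner_commute)
  define Yp where "Yp = P x"
  have Yx: "Yp \<bullet> x = 0" using assms(6,13) by (simp add: Yp_def P_eq inner_diff_left)
  have YJ: "Yp \<bullet> J x = 0" using xx by (simp add: Yp_def P_eq inner_diff_left)
  obtain U' where U': "(U has_derivative U') (at q)"
    using smooth_differentiable[OF assms(7), of q] unfolding differentiable_def by blast
  obtain W' where W': "(W has_derivative W') (at q)"
    using smooth_differentiable[OF assms(8), of q] unfolding differentiable_def by blast
  obtain Y' where Y': "\<And>z. (Y has_derivative Y' z) (at z)"
    using smooth_differentiable[OF assms(4)] unfolding differentiable_def by metis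
  define P' where "P' = frechet_derivative P (at x)"
  have Pd: "(P has_derivative P') (at x)"
  proof -
    have "\<exists>P''. (P has_derivative P'') (at x)" unfolding P_eq[abs_def]
      by (rule exI) (rule derivative_intros Y' bounded_linear.has_derivative[OF bl] has_derivative_ident)+
    hence "P differentiable (at x)" by (simp add: differentiable_def)
    thus ?thesis unfolding P'_def by (rule frechet_derivative_works[THEN iffD1])
  qed
  define D where "D = P' Xv"
  have Uq: "U q = (Xv, J Xv)"
  proof -
    have "U q = tau_lift J X x" using assms(11,13) q_def by simp
    also have "\<dots> = tau_lift J (\<lambda>_. Xv) x" by (simp add: tau_lift_def Aop_def nabla_def Xv_def)
    also have "\<dots> = (Xv, J Xv)" by (rule tau_eq[OF xx Xx])
    finally show ?thesis .
  qed
  have Wq_gen: "\<And>z. z \<in> sphere 0 1 \<Longrightarrow> W (pt J z) = (J (P z), P z)"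
  proof -
    fix z :: 'a assume z: "z \<in> sphere 0 1"
    have zz: "z \<bullet> z = 1" using z by (simp add: norm_eq_1)
    have "W (pt J z) = nu_lift J Y z" using assms(12) z by simp
    also have "\<dots> = nu_lift J (\<lambda>_. Y z) z" by (simp add: nu_lift_def)
    also have "\<dots> = (J (P z), P z)" using nu_eq[OF zz, of "Y z"] assms(6) z by (simp add: P_eq)
    finally show "W (pt J z) = (J (P z), P z)" .
  qed
  have Wq: "W q = (J Yp, Yp)" using Wq_gen[OF assms(13)] by (simp add: q_def Yp_def)
  define L where "L = (\<lambda>t::real. x + t *\<^sub>R Xv)"
  define \<gamma> where "\<gamma> = (\<lambda>t::real. inverse (norm (L t)) *\<^sub>R L t)"
  have Lx: "\<And>t. L t \<bullet> x = 1" using xx Xx by (simp add: L_def inner_add_left)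
  have nz: "\<And>t. L t \<noteq> 0" using Lx by (metis inner_zero_left zero_neq_one)
  have \<gamma>S: "\<And>t. \<gamma> t \<in> sphere 0 1" using nz by (simp add: \<gamma>_def)
  have nx: "norm x = 1" using assms(13) by simp
  have \<gamma>0: "\<gamma> 0 = x" by (simp add: \<gamma>_def L_def nx)
  have Ld: "(L has_derivative (\<lambda>t. t *\<^sub>R Xv)) (at 0)" unfolding L_def
    by (auto intro!: derivative_eq_intros)
  have nd: "((\<lambda>t. norm (L t)) has_derivative (\<lambda>t. (t *\<^sub>R Xv) \<bullet> sgn (L 0))) (at 0)"
    using has_derivative_compose[OF Ld has_derivative_norm[OF nz[of 0]]] .
  have nd0: "(\<lambda>t. (t *\<^sub>R Xv) \<bullet> sgn (L 0)) = (\<lambda>t. 0)"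
    by (simp add: L_def nx sgn_div_norm Xx)
  have id: "((\<lambda>t. inverse (norm (L t))) has_derivative (\<lambda>t. 0)) (at 0)"
    using Deriv.has_derivative_inverse[OF _ nd[unfolded nd0]] nz[of 0] by simp
  have \<gamma>d: "(\<gamma> has_derivative (\<lambda>t. t *\<^sub>R Xv)) (at 0)"
  proof -
    have "(\<gamma> has_derivative (\<lambda>t. inverse (norm (L 0)) *\<^sub>R (t *\<^sub>R Xv) + 0 *\<^sub>R L 0)) (at 0)"
      unfolding \<gamma>_def by (rule has_derivative_scaleR[OF id Ld])
    thus ?thesis by (simp add: L_def nx)
  qed
  have Pd0: "(P has_derivative P') (at (\<gamma> 0))" using Pd \<gamma>0 by simp
  have P\<gamma>d: "((\<lambda>t. P (\<gamma> t)) has_derivative (\<lambda>t. P' (t *\<^sub>R Xv))) (at 0)"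
    using has_derivative_compose[OF \<gamma>d Pd0] .
  have p\<gamma>d: "((\<lambda>t. pt J (\<gamma> t)) has_derivative (\<lambda>t. (t *\<^sub>R Xv, t *\<^sub>R J Xv))) (at 0)"
    unfolding pt_def using has_derivative_Pair[OF \<gamma>d bounded_linear.has_derivative[OF bl \<gamma>d]] by simp
  have W'0: "(W has_derivative W') (at (pt J (\<gamma> 0)))" using W' \<gamma>0 q_def by simp
  have h1: "((\<lambda>t. W (pt J (\<gamma> t))) has_derivative (\<lambda>t. W' (t *\<^sub>R Xv, t *\<^sub>R J Xv))) (at 0)"
    using has_derivative_compose[OF p\<gamma>d W'0] .
  have h2: "((\<lambda>t. (J (P (\<gamma> t)), P (\<gamma> t))) has_derivative (\<lambda>t. (J (P' (t *\<^sub>R Xv)), P' (t *\<^sub>R Xv)))) (at 0)"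
    using has_derivative_Pair[OF bounded_linear.has_derivative[OF bl P\<gamma>d] P\<gamma>d] .
  have eqf: "(\<lambda>t. W (pt J (\<gamma> t))) = (\<lambda>t. (J (P (\<gamma> t)), P (\<gamma> t)))"
    by (rule ext) (rule Wq_gen[OF \<gamma>S])
  have "(\<lambda>t. W' (t *\<^sub>R Xv, t *\<^sub>R J Xv)) = (\<lambda>t. (J (P' (t *\<^sub>R Xv)), P' (t *\<^sub>R Xv)))"
    using has_derivative_unique[OF h1[unfolded eqf] h2] .
  from fun_cong[OF this, of 1] have W'U: "W' (U q) = (J D, D)" by (simp add: Uq D_def)
  have zf: "(\<lambda>t. P (\<gamma> t) \<bullet> \<gamma> t) = (\<lambda>t. 0)"
  proof (rule ext)
    fix t
    have "\<gamma> t \<bullet> \<gamma> t = 1" using \<gamma>S[of t] by (simp add: norm_eq_1)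
    thus "P (\<gamma> t) \<bullet> \<gamma> t = 0" using assms(6) \<gamma>S[of t] by (simp add: P_eq inner_diff_left)
  qed
  have h3: "((\<lambda>t. P (\<gamma> t) \<bullet> \<gamma> t) has_derivative (\<lambda>h. P (\<gamma> 0) \<bullet> (h *\<^sub>R Xv) + P' (h *\<^sub>R Xv) \<bullet> \<gamma> 0)) (at 0)"
    using has_derivative_inner[OF P\<gamma>d \<gamma>d] .
  have "(\<lambda>h. P (\<gamma> 0) \<bullet> (h *\<^sub>R Xv) + P' (h *\<^sub>R Xv) \<bullet> \<gamma> 0) = (\<lambda>h. 0)"
    using has_derivative_unique[OF h3[unfolded zf] has_derivative_const] .
  from fun_cong[OF this, of 1] have Dx: "D \<bullet> x = - (Xv \<bullet> Yp)"
    by (simp add: \<gamma>0 D_def Yp_def inner_commute)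
  define N where "N = tanp x D"
  define AY where "AY = - tanp x (J Yp)"
  have Nx: "N \<bullet> x = 0" using xx by (simp add: N_def tanp_def inner_diff_left)
  have AYx: "AY \<bullet> x = 0" using xx by (simp add: AY_def tanp_def inner_diff_left)
  have nab: "nabla X (perp J Y) x = N"
    by (simp add: nabla_def dd_def N_def D_def P'_def P_def Xv_def)
  have aop: "Aop J (perp J Y) x = AY"
    by (simp add: Aop_eq2 AY_def Yp_def P_def)
  have nu1: "nu_lift J (nabla X (perp J Y)) x = (J (N - (N \<bullet> J x) *\<^sub>R J x), N - (N \<bullet> J x) *\<^sub>R J x)"
  proof -
    have "nu_lift J (nabla X (perp J Y)) x = nu_lift J (\<lambda>_. N) x" by (simp add: nu_lift_def nab)
    thus ?thesis using nu_eq[OF xx Nx] by simp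
  qed
  have nu2: "nu_lift J (Aop J (perp J Y)) x = (J (AY - (AY \<bullet> J x) *\<^sub>R J x), AY - (AY \<bullet> J x) *\<^sub>R J x)"
  proof -
    have "nu_lift J (Aop J (perp J Y)) x = nu_lift J (\<lambda>_. AY) x" by (simp add: nu_lift_def aop)
    thus ?thesis using nu_eq[OF xx AYx] by simp
  qed
  define w0 where "w0 = (J (N - (N \<bullet> J x) *\<^sub>R J x), N - (N \<bullet> J x) *\<^sub>R J x)
            - (1/2 * (J x \<bullet> Xv)) *\<^sub>R (J (AY - (AY \<bullet> J x) *\<^sub>R J x), AY - (AY \<bullet> J x) *\<^sub>R J x)"
  have rhs: "nu_lift J (nabla X (perp J Y)) x - (1/2 * (J x \<bullet> X x)) *\<^sub>R nu_lift J (Aop J (perp J Y)) x = w0"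
    by (simp add: nu1 nu2 w0_def Xv_def)
  have w0T: "w0 \<in> TT1S q"
    unfolding w0_def q_eq by (intro TT1S_diff TT1S_scale nu_in xx Nx AYx)
  have K: "\<And>Z :: 'a \<times> 'a \<Rightarrow> 'a \<times> 'a. smooth Z \<and> (\<forall>p\<in>T1S. Z p \<in> TT1S p) \<Longrightarrow>
        2 * sasaki q w0 (Z q) =
          dd (\<lambda>p. sasaki p (W p) (Z p)) q (U q)
        + dd (\<lambda>p. sasaki p (U p) (Z p)) q (W q)
        - dd (\<lambda>p. sasaki p (U p) (W p)) q (Z q)
        + sasaki q (bracket U W q) (Z q)
        - sasaki q (bracket U Z q) (W q)
        - sasaki q (bracket W Z q) (U q)"
  proof -
    fix Z :: "'a \<times> 'a \<Rightarrow> 'a \<times> 'a" assume Z: "smooth Z \<and> (\<forall>p\<in>T1S. Z p \<in> TT1S p)"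
    obtain Z' where Z': "(Z has_derivative Z') (at q)"
      using smooth_differentiable[of Z q] Z unfolding differentiable_def by blast
    have ZqT: "Z q \<in> TT1S q" using Z qT by blast
    obtain z1 z2 where zz: "Z q = (z1, z2)" by force
    have zc: "z1 \<bullet> x = 0" "z1 \<bullet> J x + z2 \<bullet> x = 0" "z2 \<bullet> J x = 0"
    proof -
      have "(z1, z2) \<in> TT1S (x, J x)" using ZqT unfolding zz by (simp only: q_eq)
      thus "z1 \<bullet> x = 0" "z1 \<bullet> J x + z2 \<bullet> x = 0" "z2 \<bullet> J x = 0" by (auto simp: TT1S_def TTS_def)
    qed
    show "2 * sasaki q w0 (Z q) =
          dd (\<lambda>p. sasaki p (W p) (Z p)) q (U q)
        + dd (\<lambda>p. sasaki p (U p) (Z p)) q (W q)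
        - dd (\<lambda>p. sasaki p (U p) (W p)) q (Z q)
        + sasaki q (bracket U W q) (Z q)
        - sasaki q (bracket U Z q) (W q)
        - sasaki q (bracket W Z q) (U q)"
      unfolding koszul[OF U' W' Z'] W'U
      unfolding Uq Wq zz
      unfolding q_eq w0_def N_def AY_def
      by (rule alg[OF xx Xx Yx YJ Dx zc])
  qed
  have "LCT1 U W q = w0"
    unfolding LCT1_def
  proof (rule the_equality)
    show "w0 \<in> TT1S q \<and> (\<forall>Z. smooth Z \<and> (\<forall>p\<in>T1S. Z p \<in> TT1S p) \<longrightarrow>
        2 * sasaki q w0 (Z q) =
          dd (\<lambda>p. sasaki p (W p) (Z p)) q (U q)
        + dd (\<lambda>p. sasaki p (U p) (Z p)) q (W q)
        - dd (\<lambda>p. sasaki p (U p) (W p)) q (Z q)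
        + sasaki q (bracket U W q) (Z q)
        - sasaki q (bracket U Z q) (W q)
        - sasaki q (bracket W Z q) (U q))"
      using w0T K by blast
  next
    fix w assume w: "w \<in> TT1S q \<and> (\<forall>Z. smooth Z \<and> (\<forall>p\<in>T1S. Z p \<in> TT1S p) \<longrightarrow>
        2 * sasaki q w (Z q) =
          dd (\<lambda>p. sasaki p (W p) (Z p)) q (U q)
        + dd (\<lambda>p. sasaki p (U p) (Z p)) q (W q)
        - dd (\<lambda>p. sasaki p (U p) (W p)) q (Z q)
        + sasaki q (bracket U W q) (Z q)
        - sasaki q (bracket U Z q) (W q)
        - sasaki q (bracket W Z q) (U q))"
    have dT: "w - w0 \<in> TT1S q" using w w0T by (intro TT1S_diff) auto
    obtain Z where Z: "smooth Z" "\<forall>p\<in>T1S. Z p \<in> TT1S p" "Z q = w - w0"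
      using exists_field[OF qT dT] by blast
    have "2 * sasaki q w (Z q) = 2 * sasaki q w0 (Z q)" using w K[of Z] Z by auto
    hence "sasaki q (w - w0) (w - w0) = 0" using Z(3) by (simp add: sasaki_diff_left)
    hence "w - w0 = 0" by (rule sasaki_pos[OF qT dT])
    thus "w = w0" by simp
  qed
  thus ?thesis using rhs q_def by simp
qed

end
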